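(* Let $G=(V,E,m,w)$ be a weighted graph admitting an intrinsic metric $\rho$ such that every ball $B_R(x)=\{y\in V:\rho(y,x)\le R\}$ ($x\in V$, $R>0$) is a finite set and the jump size $s:=\sup_{x\sim y}\rho(x,y)$ is finite. Suppose $G$ has polynomial volume growth with respect to $\rho$, i.e. there are $x_0\in V$ and constants $\alpha, C$ such that $m(B_R(x_0))\le C(1+R)^{\alpha}$ for all $R>0$. Then for all real $k\ge 1$, $$\dim \widetilde{\mathcal{P}}_{2k}(G)\le (k+1)\dim \mathcal{H}_{2k}(G).$$
   Context: A weighted graph $G=(V,E,m,w)$ consists of a locally finite, simple, undirected, connected graph $(V,E)$, a symmetric edge weight $w:E\to(0,\infty)$, $\{x,y\}\mapsto w_{xy}=w_{yx}$ (extended by $w_{xy}=0$ if $x\not\sim y$), and a vertex weight $m:V\to(0,\infty)$; $m(\Omega)=\sum_{x\in\Omega}m_x$. The Laplacian is $\Delta f(x)=\sum_{y\sim x}\frac{w_{xy}}{m_x}(f(y)-f(x))$. A (pseudo)metric $\rho:V\times V\to[0,\infty)$ (symmetric, triangle inequality, $\rho(x,x)=0$) is intrinsic if $\sum_{y\sim x}w_{xy}\rho^2(x,y)\le m_x$ for all $x\in V$. $\mathcal{H}_k(G)$ is the space of functions $f$ on $V$ with $\Delta f=0$ such that there exist $x_0\in V$ and $C_f$ with $\sup_{x\in B_R(x_0)}|f(x)|\le C_f(1+R)^k$ for all $R>0$. Let $\mathbb{Z}_-=\mathbb{Z}\cap(-\infty,0]$. An ancient solution of the discrete-time heat equation is a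 function $v$ on $V\times\mathbb{Z}_-$ with $v(x,t)-v(x,t-1)=\Delta v(x,t)$ for all $x\in V$, $t\in\mathbb{Z}_-$. $\widetilde{\mathcal{P}}_k(G)$ is the space of such ancient solutions $v$ for which there are $x_0\in V$ and $C_v$ with $\sup_{(x,t)\in B_R(x_0)\times([-R^2,0]\cap\mathbb{Z})}|v(x,t)|\le C_v(1+R)^k$ for all $R>0$. *)

theory Defs
  imports "HOL-Analysis.Analysis" "HOL-Library.Function_Algebras"
begin

text \<open>Weighted graphs. Vertices are the elements of the type 'v (V = UNIV).
  Edge weights w x y (with w x y = 0 iff x, y not adjacent), vertex weights m.\<close>

definition adj :: "('v \<Rightarrow> 'v \<Rightarrow> real) \<Rightarrow> 'v \<Rightarrow> 'v \<Rightarrow> bool" where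
  "adj w x y \<longleftrightarrow> w x y > 0"

definition weighted_graph :: "('v \<Rightarrow> real) \<Rightarrow> ('v \<Rightarrow> 'v \<Rightarrow> real) \<Rightarrow> bool" where
  "weighted_graph m w \<longleftrightarrow>
     (\<forall>x y. w x y = w y x) \<and> (\<forall>x y. w x y \<ge> 0) \<and> (\<forall>x. w x x = 0) \<and>
     (\<forall>x. m x > 0) \<and>
     (\<forall>x. finite {y. adj w x y}) \<and>
     (\<forall>x y. (adj w)\<^sup>*\<^sup>* x y)"

definition laplacian :: "('v \<Rightarrow> real) \<Rightarrow> ('v \<Rightarrow> 'v \<Rightarrow> real) \<Rightarrow> ('v \<Rightarrow> real) \<Rightarrow> 'v \<Rightarrow> real" where
  "laplacian m w f x = (\<Sum>y\<in>{y. adj w x y}. w x y / m x * (f y - f x))"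

definition pseudometric :: "('v \<Rightarrow> 'v \<Rightarrow> real) \<Rightarrow> bool" where
  "pseudometric \<rho> \<longleftrightarrow> (\<forall>x y. \<rho> x y \<ge> 0) \<and> (\<forall>x y. \<rho> x y = \<rho> y x) \<and> (\<forall>x. \<rho> x x = 0)
     \<and> (\<forall>x y z. \<rho> x z \<le> \<rho> x y + \<rho> y z)"

definition intrinsic :: "('v \<Rightarrow> real) \<Rightarrow> ('v \<Rightarrow> 'v \<Rightarrow> real) \<Rightarrow> ('v \<Rightarrow> 'v \<Rightarrow> real) \<Rightarrow> bool" where
  "intrinsic m w \<rho> \<longleftrightarrow> pseudometric \<rho> \<and>
     (\<forall>x. (\<Sum>y\<in>{y. adj w x y}. w x y * (\<rho> x y)\<^sup>2) \<le> m x)"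

definition rball :: "('v \<Rightarrow> 'v \<Rightarrow> real) \<Rightarrow> 'v \<Rightarrow> real \<Rightarrow> 'v set" where
  "rball \<rho> x R = {y. \<rho> y x \<le> R}"

definition harm_poly :: "('v \<Rightarrow> real) \<Rightarrow> ('v \<Rightarrow> 'v \<Rightarrow> real) \<Rightarrow> ('v \<Rightarrow> 'v \<Rightarrow> real) \<Rightarrow> real \<Rightarrow> ('v \<Rightarrow> real) set" where
  "harm_poly m w \<rho> k = {f. (\<forall>x. laplacian m w f x = 0) \<and>
     (\<exists>x0 C. \<forall>R>0. \<forall>x\<in>rball \<rho> x0 R. \<bar>f x\<bar> \<le> C * (1 + R) powr k)}"

text \<open>A function on V \<times> Z_- is represented as a function on
  V \<times> Z that vanishes for t > 0 (this normalisation identifies the two spaces linearly).\<close>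
definition ancient_poly :: "('v \<Rightarrow> real) \<Rightarrow> ('v \<Rightarrow> 'v \<Rightarrow> real) \<Rightarrow> ('v \<Rightarrow> 'v \<Rightarrow> real) \<Rightarrow> real \<Rightarrow> ('v \<times> int \<Rightarrow> real) set" where
  "ancient_poly m w \<rho> k = {v. (\<forall>x t. t > 0 \<longrightarrow> v (x, t) = 0) \<and>
     (\<forall>x t. t \<le> 0 \<longrightarrow> v (x, t) - v (x, t - 1) = laplacian m w (\<lambda>y. v (y, t)) x) \<and>
     (\<exists>x0 C. \<forall>R>0. \<forall>x\<in>rball \<rho> x0 R. \<forall>t::int. - (R\<^sup>2) \<le> real_of_int t \<and> t \<le> 0 \<longrightarrow>
        \<bar>v (x, t)\<bar> \<le> C * (1 + R) powr k)}"

definition fscale :: "real \<Rightarrow> ('a \<Rightarrow> real) \<Rightarrow> ('a \<Rightarrow> real)" where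
  "fscale c f = (\<lambda>x. c * f x)"

definition fdim :: "('a \<Rightarrow> real) set \<Rightarrow> ereal" where
  "fdim S = (if \<exists>B. finite B \<and> \<not> module.dependent fscale B
                   \<and> module.span fscale B = module.span fscale S
             then ereal (real (Vector_Spaces.vector_space.dim fscale S)) else \<infinity>)"

end

theory Submission
  imports Defs
begin


definition fdiff :: "nat \<Rightarrow> (nat \<Rightarrow> real) \<Rightarrow> nat \<Rightarrow> real" where
  "fdiff h a n = a (n + h) - a n"

lemma fdiff_comm: "fdiff p (fdiff q a) = fdiff q (fdiff p a)"
  by (rule ext) (simp add: fdiff_def algebra_simps)

lemma fdiff_pow_comm: "((fdiff q) ^^ j) (fdiff p a) = fdiff p (((fdiff q) ^^ j) a)"
  by (induction j) (auto simp: fdiff_comm)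

lemma fdiff_tele: "fdiff h a n = (\<Sum>r<h. fdiff 1 a (n + r))"
  by (induction h) (auto simp: fdiff_def)

lemma fdiff_step_h:
  assumes "\<forall>n. ((fdiff 1) ^^ D) a n = c"
  shows "((fdiff h) ^^ D) a n = real h ^ D * c"
  using assms
proof (induction D arbitrary: a c n)
  case 0
  then show ?case by simp
next
  case (Suc D)
  define b where "b = fdiff h a"
  have "((fdiff 1) ^^ D) b n' = real h * c" for n'
  proof -
    have "((fdiff 1) ^^ D) b n' = fdiff h (((fdiff 1) ^^ D) a) n'"
      unfolding b_def by (simp add: fdiff_pow_comm)
    also have "\<dots> = (\<Sum>r<h. fdiff 1 (((fdiff 1) ^^ D) a) (n' + r))"
      by (rule fdiff_tele)
    also have "\<dots> = (\<Sum>r<h. c)"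
      using Suc.prems by (intro sum.cong) auto
    finally show ?thesis by simp
  qed
  then have "((fdiff h) ^^ D) b n = real h ^ D * (real h * c)"
    using Suc.IH by blast
  moreover have "((fdiff h) ^^ Suc D) a = ((fdiff h) ^^ D) b"
    unfolding b_def by (simp add: fdiff_pow_comm)
  ultimately show ?case by simp
qed

lemma fdiff_bound:
  assumes "\<And>m'. n \<le> m' \<Longrightarrow> m' \<le> n + D * h \<Longrightarrow> \<bar>a m'\<bar> \<le> M"
  shows "\<bar>((fdiff h) ^^ D) a n\<bar> \<le> 2 ^ D * M"
  using assms
proof (induction D arbitrary: a M)
  case 0
  then show ?case by simp
next
  case (Suc D)
  have "\<bar>fdiff h a m'\<bar> \<le> 2 * M" if "n \<le> m'" "m' \<le> n + D * h" for m'
  proof -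
    have "\<bar>a (m' + h)\<bar> \<le> M" "\<bar>a m'\<bar> \<le> M" using Suc.prems that by auto
    then show ?thesis unfolding fdiff_def by linarith
  qed
  then have "\<bar>((fdiff h) ^^ D) (fdiff h a) n\<bar> \<le> 2 ^ D * (2 * M)"
    using Suc.IH by blast
  then show ?case by (simp add: fdiff_pow_comm)
qed

lemma zero_by_decay:
  fixes c K e Rlow :: real
  assumes "e > 0" "\<And>R. R \<ge> Rlow \<Longrightarrow> \<bar>c\<bar> \<le> K * R powr (- e)"
  shows "c = 0"
proof -
  have lim: "((\<lambda>R. K * R powr (- e)) \<longlongrightarrow> K * 0) at_top"
    by (intro tendsto_mult tendsto_const tendsto_neg_powr filterlim_ident) (use assms in auto)
  have "eventually (\<lambda>R. \<bar>c\<bar> \<le> K * R powr (- e)) at_top"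
    using assms(2) eventually_at_top_linorder by blast
  then have "\<bar>c\<bar> \<le> K * 0"
    by (intro tendsto_le[OF _ lim tendsto_const]) auto
  then show ?thesis by simp
qed

lemma fscale_vs: "vector_space (fscale :: real \<Rightarrow> ('a \<Rightarrow> real) \<Rightarrow> _)"
  by unfold_locales (auto simp: fscale_def algebra_simps)

interpretation fs: vector_space "fscale :: real \<Rightarrow> ('a \<Rightarrow> real) \<Rightarrow> _"
  by (rule fscale_vs)



lemma filtration_bound:
  fixes P :: "('a \<Rightarrow> real) set" and L :: "nat \<Rightarrow> ('a \<Rightarrow> real) \<Rightarrow> ('b \<Rightarrow> real)"
    and H BH :: "('b \<Rightarrow> real) set"
  assumes sub: "fs.subspace P"
   and lin: "\<And>i. module_hom fscale fscale (L i)"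
   and inj0: "\<And>v. v \<in> P \<Longrightarrow> L 0 v = 0 \<Longrightarrow> v = 0"
   and top: "\<And>v. v \<in> P \<Longrightarrow> L (Suc K) v = 0"
   and harm: "\<And>i v. v \<in> P \<Longrightarrow> L (Suc i) v = 0 \<Longrightarrow> L i v \<in> fs.span H"
   and BH: "finite BH" "fs.span BH = fs.span H"
  shows "\<exists>T. finite T \<and> card T \<le> Suc K * card BH \<and> P \<subseteq> fs.span T"
proof -
  define F where "F i = {v \<in> P. L i v = 0}" for i
  have Fsub: "fs.subspace (F i)" for i
  proof -
    interpret h: module_hom fscale fscale "L i" by (rule lin)
    have "F i = P \<inter> {x. L i x = 0}" unfolding F_def by auto
    then show ?thesis using fs.subspace_inter[OF sub h.subspace_kernel] by simp
  qed
  have "\<exists>T. finite T \<and> card T \<le> i * card BH \<and> F i \<subseteq> fs.span T" for i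
  proof (induction i)
    case 0
    have "F 0 \<subseteq> fs.span {}" using inj0 fs.span_zero unfolding F_def by auto
    then show ?case by (intro exI[of _ "{}"]) auto
  next
    case (Suc i)
    then obtain T where T: "finite T" "card T \<le> i * card BH" "F i \<subseteq> fs.span T" by blast
    interpret h: module_hom fscale fscale "L i" by (rule lin)
    define Im where "Im = L i ` F (Suc i)"
    obtain C where C: "C \<subseteq> Im" "fs.independent C" "Im \<subseteq> fs.span C"
      using fs.maximal_independent_subset by blast
    have "Im \<subseteq> fs.span H" unfolding Im_def F_def using harm by auto
    then have "C \<subseteq> fs.span BH" using C(1) BH(2) by auto
    then have Cfin: "finite C" "card C \<le> card BH"
      using fs.independent_span_bound[OF BH(1) C(2)] by auto
    have "\<forall>c\<in>C. \<exists>u. u \<in> F (Suc i) \<and> L i u = c" using C(1) unfolding Im_def by auto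
    then obtain pre where pre: "\<And>c. c \<in> C \<Longrightarrow> pre c \<in> F (Suc i) \<and> L i (pre c) = c"
      by metis
    define T' where "T' = pre ` C"
    have T'fin: "finite T'" "card T' \<le> card BH"
      unfolding T'_def using Cfin card_image_le[OF Cfin(1), of pre] by auto
    have LT': "L i ` T' = C" unfolding T'_def using pre by (force simp: image_image)
    have "T' \<subseteq> F (Suc i)" using pre unfolding T'_def by auto
    then have T'F: "fs.span T' \<subseteq> F (Suc i)"
      using fs.span_minimal[OF _ Fsub] by blast
    have "F (Suc i) \<subseteq> fs.span (T \<union> T')"
    proof
      fix v assume v: "v \<in> F (Suc i)"
      then have "L i v \<in> fs.span C" using C(3) unfolding Im_def by auto
      then have "L i v \<in> L i ` fs.span T'" using h.span_image[of T'] LT' by simp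
      then obtain u where u: "u \<in> fs.span T'" "L i u = L i v" by auto
      have "u \<in> F (Suc i)" using u(1) T'F by auto
      then have "v - u \<in> F (Suc i)" using fs.subspace_diff[OF Fsub v] by auto
      moreover have "L i (v - u) = 0" using h.diff u(2) by simp
      ultimately have "v - u \<in> F i" unfolding F_def by auto
      then have "v - u \<in> fs.span (T \<union> T')" using T(3) fs.span_mono[of T "T \<union> T'"] by auto
      moreover have "u \<in> fs.span (T \<union> T')" using u(1) fs.span_mono[of T' "T \<union> T'"] by auto
      ultimately have "(v - u) + u \<in> fs.span (T \<union> T')" by (rule fs.span_add)
      then show "v \<in> fs.span (T \<union> T')" by simp
    qed
    moreover have "card (T \<union> T') \<le> Suc i * card BH"
      using card_Un_le[of T T'] T(2) T'fin(2) by simp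
    ultimately show ?case using T(1) T'fin(1) by blast
  qed
  moreover have "F (Suc K) = P" unfolding F_def using top by auto
  ultimately show ?thesis by metis
qed



lemma sum_swap_sym:
  assumes "\<And>x y. (x, y) \<in> E \<longleftrightarrow> (y, x) \<in> E"
  shows "(\<Sum>p\<in>E. g p) = (\<Sum>p\<in>E. g (snd p, fst p))"
  by (rule sum.reindex_bij_witness[where i="\<lambda>p. (snd p, fst p)" and j="\<lambda>p. (snd p, fst p)"])
     (use assms in auto)

lemma pair_ineq:
  fixes a b p q W :: real
  assumes "W \<ge> 0"
  shows "W * (a - b) * (p\<^sup>2 * a - q\<^sup>2 * b) \<ge> - (W * (p - q)\<^sup>2 * (a\<^sup>2 + b\<^sup>2)) / 2"
proof -
  have id: "(a - b) * (p\<^sup>2 * a - q\<^sup>2 * b) = (p * a - q * b)\<^sup>2 - (p - q)\<^sup>2 * (a * b)"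
    by (simp add: power2_eq_square algebra_simps)
  have e: "(a - b)\<^sup>2 = a\<^sup>2 + b\<^sup>2 - 2 * (a * b)" by (simp add: power2_diff algebra_simps)
  have ab: "a * b \<le> (a\<^sup>2 + b\<^sup>2) / 2" using zero_le_power2[of "a - b"] unfolding e by (simp add: field_simps)
  have "(p - q)\<^sup>2 * (a * b) \<le> (p - q)\<^sup>2 * ((a\<^sup>2 + b\<^sup>2) / 2)"
    by (rule mult_left_mono[OF ab]) simp
  then have "(a - b) * (p\<^sup>2 * a - q\<^sup>2 * b) \<ge> - ((p - q)\<^sup>2 * (a\<^sup>2 + b\<^sup>2)) / 2"
    unfolding id using zero_le_power2[of "p * a - q * b"] by linarith
  from mult_left_mono[OF this assms] show ?thesis by (simp add: algebra_simps)
qed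

locale gr =
  fixes m :: "'v \<Rightarrow> real" and w :: "'v \<Rightarrow> 'v \<Rightarrow> real" and \<rho> :: "'v \<Rightarrow> 'v \<Rightarrow> real"
    and x0 :: 'v and s :: real
  assumes wg: "weighted_graph m w" and intr: "intrinsic m w \<rho>"
    and finb: "\<And>x R. R > 0 \<Longrightarrow> finite (rball \<rho> x R)"
    and jump: "\<And>x y. adj w x y \<Longrightarrow> \<rho> x y \<le> s" and s0: "s \<ge> 0"
begin

definition N :: "'v \<Rightarrow> 'v set" where "N x = {y. adj w x y}"
definition A :: "('v \<Rightarrow> real) \<Rightarrow> 'v \<Rightarrow> real" where
  "A f = (\<lambda>x. \<Sum>y\<in>N x. w x y / m x * (f x - f y))"
definition B :: "real \<Rightarrow> 'v set" where "B R = rball \<rho> x0 R"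
definition \<phi> :: "real \<Rightarrow> 'v \<Rightarrow> real" where "\<phi> R x = min 1 (max 0 (2 - \<rho> x x0 / R))"

lemma m_pos: "m x > 0" using wg unfolding weighted_graph_def by auto
lemma w_sym: "w x y = w y x" using wg unfolding weighted_graph_def by auto
lemma w_nonneg: "w x y \<ge> 0" using wg unfolding weighted_graph_def by auto
lemma finN: "finite (N x)" using wg unfolding weighted_graph_def N_def by auto
lemma adj_sym: "adj w x y \<longleftrightarrow> adj w y x" unfolding adj_def using w_sym by auto
lemma rho_nonneg: "\<rho> x y \<ge> 0" using intr unfolding intrinsic_def pseudometric_def by auto
lemma rho_sym: "\<rho> x y = \<rho> y x" using intr unfolding intrinsic_def pseudometric_def by auto
lemma rho_refl: "\<rho> x x = 0" using intr unfolding intrinsic_def pseudometric_def by auto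
lemma rho_tri: "\<rho> x y \<le> \<rho> x z + \<rho> z y" using intr unfolding intrinsic_def pseudometric_def by blast
lemma intr_sum: "(\<Sum>y\<in>N x. w x y * (\<rho> x y)\<^sup>2) \<le> m x"
  using intr unfolding intrinsic_def N_def by auto

lemma lap_A: "laplacian m w f x = - A f x"
  unfolding laplacian_def A_def N_def by (simp add: sum_negf[symmetric] minus_divide_left algebra_simps)

lemma A_add: "A (\<lambda>x. f x + g x) = (\<lambda>x. A f x + A g x)"
  unfolding A_def by (rule ext) (simp add: sum.distrib[symmetric] diff_divide_distrib[symmetric] add_divide_distrib[symmetric] algebra_simps)
lemma A_scale: "A (\<lambda>x. c * f x) = (\<lambda>x. c * A f x)"
  unfolding A_def by (rule ext) (simp add: sum_distrib_left diff_divide_distrib[symmetric] algebra_simps)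
lemma A_diff: "A (\<lambda>x. f x - g x) = (\<lambda>x. A f x - A g x)"
  unfolding A_def by (rule ext) (simp add: sum_subtractf[symmetric] diff_divide_distrib[symmetric] algebra_simps)
lemma A_zero: "A (\<lambda>x. 0) = (\<lambda>x. 0)"
  unfolding A_def by simp

lemma Aj_add: "(A ^^ j) (\<lambda>x. f x + g x) = (\<lambda>x. (A ^^ j) f x + (A ^^ j) g x)"
  by (induction j) (auto simp: A_add)
lemma Aj_scale: "(A ^^ j) (\<lambda>x. c * f x) = (\<lambda>x. c * (A ^^ j) f x)"
  by (induction j) (auto simp: A_scale)
lemma Aj_diff: "(A ^^ j) (\<lambda>x. f x - g x) = (\<lambda>x. (A ^^ j) f x - (A ^^ j) g x)"
  by (induction j) (auto simp: A_diff)
lemma Aj_zero: "(A ^^ j) (\<lambda>x. 0) = (\<lambda>x. 0)"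
  by (induction j) (auto simp: A_zero)

lemma finB: "finite (B R)"
proof (cases "R > 0")
  case True then show ?thesis using finb unfolding B_def by auto
next
  case False
  then have "B R \<subseteq> B 1" unfolding B_def rball_def by auto
  then show ?thesis using finb[of 1 x0] finite_subset unfolding B_def by auto
qed

lemma phi_ge0: "\<phi> R x \<ge> 0" and phi_le1: "\<phi> R x \<le> 1"
  unfolding \<phi>_def by auto

lemma phi_one: "R > 0 \<Longrightarrow> x \<in> B R \<Longrightarrow> \<phi> R x = 1"
  unfolding \<phi>_def B_def rball_def by (auto simp: field_simps)

lemma phi_supp: "R > 0 \<Longrightarrow> \<phi> R x \<noteq> 0 \<Longrightarrow> \<rho> x x0 < 2 * R"
  unfolding \<phi>_def by (auto simp: field_simps min_def max_def split: if_splits)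

lemma phi_lip: "R > 0 \<Longrightarrow> \<bar>\<phi> R x - \<phi> R y\<bar> \<le> \<rho> x y / R"
proof -
  assume R: "R > 0"
  have "\<bar>\<rho> x x0 - \<rho> y x0\<bar> \<le> \<rho> x y"
    using rho_tri[of x x0 y] rho_tri[of y x0 x] rho_sym[of x y] by linarith
  then have "\<bar>\<rho> x x0 / R - \<rho> y x0 / R\<bar> \<le> \<rho> x y / R"
    using R by (simp add: diff_divide_distrib[symmetric] abs_divide divide_right_mono)
  then show ?thesis unfolding \<phi>_def by (simp add: min_def max_def) linarith
qed

lemma cross:
  assumes R: "R > 0"
  shows "(\<Sum>x\<in>B (2*R+s). m x * (\<phi> R x)\<^sup>2 * u x * A u x)
           \<ge> - (1 / (2 * R\<^sup>2)) * (\<Sum>x\<in>B (2*R+s). m x * (u x)\<^sup>2)"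
proof -
  define S where "S = B (2*R+s)"
  define F where "F p = w (fst p) (snd p) * (\<phi> R (fst p))\<^sup>2 * u (fst p) * (u (fst p) - u (snd p))" for p
  define G where "G p = w (fst p) (snd p) * (\<phi> R (fst p) - \<phi> R (snd p))\<^sup>2 * (u (fst p))\<^sup>2" for p
  define E where "E = Sigma S (\<lambda>x. N x \<inter> S)"
  have finS: "finite S" unfolding S_def by (rule finB)
  have finE: "finite E" unfolding E_def using finS by auto
  have Esym: "(x, y) \<in> E \<longleftrightarrow> (y, x) \<in> E" for x y
    unfolding E_def N_def using adj_sym by auto
  have e1: "(\<Sum>x\<in>S. m x * (\<phi> R x)\<^sup>2 * u x * A u x) = (\<Sum>x\<in>S. \<Sum>y\<in>N x. F (x, y))"
  proof (intro sum.cong refl)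
    fix x assume "x \<in> S"
    have "m x \<noteq> 0" using m_pos[of x] by auto
    then show "m x * (\<phi> R x)\<^sup>2 * u x * A u x = (\<Sum>y\<in>N x. F (x, y))"
      unfolding A_def F_def sum_distrib_left by (intro sum.cong refl) (simp add: field_simps)
  qed
  have e2: "(\<Sum>y\<in>N x. F (x, y)) = (\<Sum>y\<in>N x \<inter> S. F (x, y))" if x: "x \<in> S" for x
  proof (rule sum.mono_neutral_right[OF finN])
    show "N x \<inter> S \<subseteq> N x" by auto
    show "\<forall>y\<in>N x - N x \<inter> S. F (x, y) = 0"
    proof
      fix y assume y: "y \<in> N x - N x \<inter> S"
      have "\<phi> R x = 0"
      proof (rule ccontr)
        assume "\<phi> R x \<noteq> 0"
        then have "\<rho> x x0 < 2 * R" using phi_supp R by auto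
        moreover have "\<rho> y x \<le> s" using y jump[of x y] rho_sym unfolding N_def by auto
        ultimately have "\<rho> y x0 \<le> 2 * R + s" using rho_tri[of y x0 x] by linarith
        then show False using y unfolding S_def B_def rball_def by auto
      qed
      then show "F (x, y) = 0" unfolding F_def by simp
    qed
  qed
  have e3: "(\<Sum>x\<in>S. \<Sum>y\<in>N x \<inter> S. F (x, y)) = (\<Sum>p\<in>E. F p)"
    unfolding E_def using sum.Sigma[OF finS, of "\<lambda>x. N x \<inter> S" "\<lambda>x y. F (x, y)"] finS finN
    by (simp add: split_def)
  have sumF: "(\<Sum>x\<in>S. m x * (\<phi> R x)\<^sup>2 * u x * A u x) = (\<Sum>p\<in>E. F p)"
    using e1 e2 e3 by simp
  have "2 * (\<Sum>p\<in>E. F p) = (\<Sum>p\<in>E. F p + F (snd p, fst p))"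
    using sum_swap_sym[OF Esym, of F] by (simp add: sum.distrib)
  also have "\<dots> \<ge> (\<Sum>p\<in>E. - (G p + G (snd p, fst p)) / 2)"
  proof (rule sum_mono)
    fix p assume "p \<in> E"
    obtain x y where p: "p = (x, y)" by fastforce
    have "F p + F (snd p, fst p) = w x y * (u x - u y) * ((\<phi> R x)\<^sup>2 * u x - (\<phi> R y)\<^sup>2 * u y)"
      unfolding F_def p using w_sym[of x y] by (simp add: algebra_simps)
    also have "\<dots> \<ge> - (w x y * (\<phi> R x - \<phi> R y)\<^sup>2 * ((u x)\<^sup>2 + (u y)\<^sup>2)) / 2"
      by (rule pair_ineq[OF w_nonneg])
    finally show "- (G p + G (snd p, fst p)) / 2 \<le> F p + F (snd p, fst p)"
      unfolding G_def p using w_sym[of x y]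
      by (simp add: algebra_simps power2_commute[of "\<phi> R x"])
  qed
  finally have h2: "2 * (\<Sum>p\<in>E. F p) \<ge> (\<Sum>p\<in>E. - (G p + G (snd p, fst p)) / 2)" .
  have "(\<Sum>p\<in>E. - (G p + G (snd p, fst p)) / 2) = - ((\<Sum>p\<in>E. G p) + (\<Sum>p\<in>E. G (snd p, fst p))) / 2"
    by (simp add: sum_negf sum.distrib sum_subtractf sum_divide_distrib[symmetric])
  also have "\<dots> = - (\<Sum>p\<in>E. G p)" using sum_swap_sym[OF Esym, of G] by simp
  finally have "2 * (\<Sum>p\<in>E. F p) \<ge> - (\<Sum>p\<in>E. G p)" using h2 by simp
  moreover have "(\<Sum>p\<in>E. G p) \<le> (1 / R\<^sup>2) * (\<Sum>x\<in>S. m x * (u x)\<^sup>2)"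
  proof -
    have "(\<Sum>p\<in>E. G p) = (\<Sum>x\<in>S. \<Sum>y\<in>N x \<inter> S. G (x, y))"
      unfolding E_def using sum.Sigma[OF finS, of "\<lambda>x. N x \<inter> S" "\<lambda>x y. G (x, y)"] finS finN
      by (simp add: split_def)
    also have "\<dots> \<le> (\<Sum>x\<in>S. (1 / R\<^sup>2) * (m x * (u x)\<^sup>2))"
    proof (rule sum_mono)
      fix x assume "x \<in> S"
      have "(\<Sum>y\<in>N x \<inter> S. G (x, y)) \<le> (\<Sum>y\<in>N x. G (x, y))"
        by (rule sum_mono2[OF finN]) (auto simp: G_def w_nonneg)
      also have "\<dots> \<le> (\<Sum>y\<in>N x. w x y * (\<rho> x y)\<^sup>2 * (1 / R\<^sup>2) * (u x)\<^sup>2)"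
      proof (rule sum_mono)
        fix y assume "y \<in> N x"
        have "\<rho> x y / R \<ge> 0" using R rho_nonneg[of x y] by simp
        then have "\<bar>\<phi> R x - \<phi> R y\<bar> \<le> \<bar>\<rho> x y / R\<bar>" using phi_lip[OF R, of x y] by linarith
        then have "(\<phi> R x - \<phi> R y)\<^sup>2 \<le> (\<rho> x y / R)\<^sup>2" using abs_le_square_iff by blast
        then have "w x y * (\<phi> R x - \<phi> R y)\<^sup>2 * (u x)\<^sup>2 \<le> w x y * (\<rho> x y / R)\<^sup>2 * (u x)\<^sup>2"
          by (intro mult_right_mono mult_left_mono w_nonneg) auto
        then show "G (x, y) \<le> w x y * (\<rho> x y)\<^sup>2 * (1 / R\<^sup>2) * (u x)\<^sup>2"
          unfolding G_def by (simp add: power_divide)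
      qed
      also have "\<dots> = (\<Sum>y\<in>N x. w x y * (\<rho> x y)\<^sup>2) * ((1 / R\<^sup>2) * (u x)\<^sup>2)"
        by (simp add: sum_distrib_right sum_divide_distrib mult.assoc)
      also have "\<dots> \<le> m x * ((1 / R\<^sup>2) * (u x)\<^sup>2)"
        by (rule mult_right_mono[OF intr_sum]) auto
      finally show "(\<Sum>y\<in>N x \<inter> S. G (x, y)) \<le> (1 / R\<^sup>2) * (m x * (u x)\<^sup>2)"
        by (simp add: algebra_simps)
    qed
    also have "\<dots> = (1 / R\<^sup>2) * (\<Sum>x\<in>S. m x * (u x)\<^sup>2)" by (simp add: sum_distrib_left)
    finally show ?thesis .
  qed
  ultimately show ?thesis using sumF unfolding S_def by (simp add: field_simps)
qed

end


context gr begin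

definition sol :: "(nat \<Rightarrow> 'v \<Rightarrow> real) \<Rightarrow> bool" where
  "sol U \<longleftrightarrow> (\<forall>n. U (Suc n) = (\<lambda>x. U n x + A (U n) x))"

definition Q :: "(nat \<Rightarrow> 'v \<Rightarrow> real) \<Rightarrow> real \<Rightarrow> nat \<Rightarrow> real" where
  "Q U R Nn = (\<Sum>n<Nn. \<Sum>x\<in>B R. m x * (U n x)\<^sup>2)"

definition Gr :: "(nat \<Rightarrow> 'v \<Rightarrow> real) \<Rightarrow> real \<Rightarrow> bool" where
  "Gr U \<beta> \<longleftrightarrow> (\<exists>K. \<forall>R\<ge>1. \<forall>Nn. real Nn \<le> R\<^sup>2 \<longrightarrow> Q U R Nn \<le> K * (1 + R) powr \<beta>)"

lemma sol_d: "sol U \<Longrightarrow> sol (\<lambda>n. A (U n))"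
  unfolding sol_def by (simp add: A_add)

lemma sol_Aj: "sol U \<Longrightarrow> sol (\<lambda>n. (A ^^ j) (U n))"
  unfolding sol_def by (simp add: Aj_add funpow_swap1)

lemma Q_nonneg: "Q U R Nn \<ge> 0"
  unfolding Q_def by (intro sum_nonneg mult_nonneg_nonneg) (auto simp: less_imp_le[OF m_pos])

lemma Q_mono_N: "Nn \<le> Nn' \<Longrightarrow> Q U R Nn \<le> Q U R Nn'"
  unfolding Q_def
  by (rule sum_mono2) (auto intro!: sum_nonneg mult_nonneg_nonneg simp: less_imp_le[OF m_pos])

lemma energy:
  assumes R: "R > 0"
  shows "(\<Sum>x\<in>B R. m x * (A u x)\<^sup>2)
    \<le> (\<Sum>x\<in>B (2*R+s). m x * (\<phi> R x)\<^sup>2 * (u x + A u x)\<^sup>2)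
       - (\<Sum>x\<in>B (2*R+s). m x * (\<phi> R x)\<^sup>2 * (u x)\<^sup>2)
       + (1 / R\<^sup>2) * (\<Sum>x\<in>B (2*R+s). m x * (u x)\<^sup>2)"
proof -
  define S where "S = B (2*R+s)"
  have sub: "B R \<subseteq> S" unfolding S_def B_def rball_def using R s0 by auto
  have "(\<Sum>x\<in>B R. m x * (A u x)\<^sup>2) = (\<Sum>x\<in>B R. m x * (\<phi> R x)\<^sup>2 * (A u x)\<^sup>2)"
    using phi_one[OF R] by simp
  also have "\<dots> \<le> (\<Sum>x\<in>S. m x * (\<phi> R x)\<^sup>2 * (A u x)\<^sup>2)"
    by (rule sum_mono2[OF _ sub]) (auto simp: S_def finB less_imp_le[OF m_pos])
  finally have 1: "(\<Sum>x\<in>B R. m x * (A u x)\<^sup>2) \<le> (\<Sum>x\<in>S. m x * (\<phi> R x)\<^sup>2 * (A u x)\<^sup>2)" .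
  have 2: "(\<Sum>x\<in>S. m x * (\<phi> R x)\<^sup>2 * (u x + A u x)\<^sup>2) - (\<Sum>x\<in>S. m x * (\<phi> R x)\<^sup>2 * (u x)\<^sup>2)
      = (\<Sum>x\<in>S. m x * (\<phi> R x)\<^sup>2 * (A u x)\<^sup>2) + 2 * (\<Sum>x\<in>S. m x * (\<phi> R x)\<^sup>2 * u x * A u x)"
    by (simp add: sum_subtractf[symmetric] sum.distrib[symmetric] sum_distrib_left
        power2_eq_square algebra_simps)
  have 3: "(\<Sum>x\<in>S. m x * (\<phi> R x)\<^sup>2 * u x * A u x) \<ge> - (1 / (2 * R\<^sup>2)) * (\<Sum>x\<in>S. m x * (u x)\<^sup>2)"
    unfolding S_def by (rule cross[OF R])
  show ?thesis using 1 2 3 unfolding S_def[symmetric] by (simp add: field_simps)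
qed

lemma Qstep:
  assumes U: "sol U" and R: "R > 0" and Nn: "Nn \<ge> 1"
  shows "Q (\<lambda>n. A (U n)) R Nn \<le> (1 / real Nn + 1 / R\<^sup>2) * Q U (2*R+s) (2*Nn)"
proof -
  define S where "S = B (2*R+s)"
  define T where "T n = (\<Sum>x\<in>S. m x * (U n x)\<^sup>2)" for n
  define Sp where "Sp n = (\<Sum>x\<in>S. m x * (\<phi> R x)\<^sup>2 * (U n x)\<^sup>2)" for n
  define Z where "Z n = (\<Sum>x\<in>B R. m x * (A (U n) x)\<^sup>2)" for n
  define X where "X = (\<Sum>n<2*Nn. T n)"
  have X: "X = Q U (2*R+s) (2*Nn)" unfolding X_def T_def Q_def S_def ..
  have Zn: "Z n \<le> Sp (Suc n) - Sp n + T n / R\<^sup>2" for n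
  proof -
    have "U (Suc n) = (\<lambda>x. U n x + A (U n) x)" using U unfolding sol_def by auto
    then show ?thesis using energy[OF R, of "U n"] unfolding Z_def Sp_def T_def S_def by simp
  qed
  have T0: "T n \<ge> 0" for n unfolding T_def
    by (intro sum_nonneg mult_nonneg_nonneg) (auto simp: less_imp_le[OF m_pos])
  have Z0: "Z n \<ge> 0" for n unfolding Z_def
    by (intro sum_nonneg mult_nonneg_nonneg) (auto simp: less_imp_le[OF m_pos])
  have Sp0: "Sp n \<ge> 0" for n unfolding Sp_def
    by (intro sum_nonneg mult_nonneg_nonneg) (auto simp: less_imp_le[OF m_pos])
  have SpT: "Sp n \<le> T n" for n unfolding Sp_def T_def
  proof (rule sum_mono)
    fix x
    have "(\<phi> R x)\<^sup>2 \<le> 1" using phi_ge0[of R x] phi_le1[of R x] by (simp add: power_le_one)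
    then have "m x * (\<phi> R x)\<^sup>2 * (U n x)\<^sup>2 \<le> m x * 1 * (U n x)\<^sup>2"
      by (intro mult_right_mono mult_left_mono) (auto simp: less_imp_le[OF m_pos])
    then show "m x * (\<phi> R x)\<^sup>2 * (U n x)\<^sup>2 \<le> m x * (U n x)\<^sup>2" by simp
  qed
  have tele: "(\<Sum>n<M. Z n) \<le> T M + (\<Sum>n<M. T n) / R\<^sup>2" for M
  proof -
    have "(\<Sum>n<M. Z n) \<le> (\<Sum>n<M. (Sp (Suc n) - Sp n) + T n / R\<^sup>2)"
      by (rule sum_mono) (use Zn in auto)
    also have "\<dots> = Sp M - Sp 0 + (\<Sum>n<M. T n) / R\<^sup>2"
      by (simp add: sum.distrib sum_lessThan_telescope sum_divide_distrib)
    finally show ?thesis using SpT[of M] Sp0[of 0] by linarith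
  qed
  have QZ: "Q (\<lambda>n. A (U n)) R Nn = (\<Sum>n<Nn. Z n)" unfolding Q_def Z_def ..
  have each: "Q (\<lambda>n. A (U n)) R Nn \<le> T M + X / R\<^sup>2" if M: "M \<in> {Nn..<2*Nn}" for M
  proof -
    have "(\<Sum>n<Nn. Z n) \<le> (\<Sum>n<M. Z n)"
      by (rule sum_mono2) (use M Z0 in auto)
    also have "\<dots> \<le> T M + (\<Sum>n<M. T n) / R\<^sup>2" by (rule tele)
    also have "(\<Sum>n<M. T n) \<le> X" unfolding X_def
      by (rule sum_mono2) (use M T0 in auto)
    then have "T M + (\<Sum>n<M. T n) / R\<^sup>2 \<le> T M + X / R\<^sup>2"
      using R by (simp add: divide_right_mono)
    finally show ?thesis unfolding QZ .
  qed
  have "real Nn * Q (\<lambda>n. A (U n)) R Nn = (\<Sum>M\<in>{Nn..<2*Nn}. Q (\<lambda>n. A (U n)) R Nn)" by simp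
  also have "\<dots> \<le> (\<Sum>M\<in>{Nn..<2*Nn}. T M + X / R\<^sup>2)"
    by (rule sum_mono) (rule each)
  also have "\<dots> = (\<Sum>M\<in>{Nn..<2*Nn}. T M) + real Nn * (X / R\<^sup>2)" by (simp add: sum.distrib)
  also have "(\<Sum>M\<in>{Nn..<2*Nn}. T M) \<le> X" unfolding X_def
    by (rule sum_mono2) (use T0 in auto)
  finally have "real Nn * Q (\<lambda>n. A (U n)) R Nn \<le> X + real Nn * (X / R\<^sup>2)" by simp
  then have "Q (\<lambda>n. A (U n)) R Nn \<le> (X + real Nn * (X / R\<^sup>2)) / real Nn"
    using Nn by (simp add: field_simps)
  also have "\<dots> = (1 / real Nn + 1 / R\<^sup>2) * X" using Nn by (simp add: field_simps)
  finally show ?thesis unfolding X .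
qed

end


context gr begin

lemma Gr_step:
  assumes U: "sol U" and G: "Gr U \<beta>"
  shows "Gr (\<lambda>n. A (U n)) (\<beta> - 2)"
proof -
  obtain K where K: "\<And>R Nn. R \<ge> 1 \<Longrightarrow> real Nn \<le> R\<^sup>2 \<Longrightarrow> Q U R Nn \<le> K * (1 + R) powr \<beta>"
    using G unfolding Gr_def by blast
  define K' where "K' = max K 0"
  define c where "c = max 1 ((2 + s) powr \<beta>)"
  have K'0: "K' \<ge> 0" unfolding K'_def by auto
  have c1: "c \<ge> 1" unfolding c_def by auto
  have "Q (\<lambda>n. A (U n)) R Nn \<le> (12 * K' * c) * (1 + R) powr (\<beta> - 2)"
    if R: "R \<ge> 1" and Nn: "real Nn \<le> R\<^sup>2" for R Nn
  proof -
    define M where "M = nat \<lfloor>R\<^sup>2\<rfloor>"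
    have R2: "R\<^sup>2 \<ge> 1" using R by (simp add: one_le_power)
    have fl1: "R\<^sup>2 < real_of_int \<lfloor>R\<^sup>2\<rfloor> + 1" by (rule real_of_int_floor_add_one_gt)
    have fl2: "\<lfloor>R\<^sup>2\<rfloor> \<ge> 1" using R2 by (simp add: le_floor_iff)
    have fl3: "real_of_int \<lfloor>R\<^sup>2\<rfloor> \<le> R\<^sup>2" by (rule of_int_floor_le)
    have Meq: "real M = real_of_int \<lfloor>R\<^sup>2\<rfloor>" unfolding M_def using fl2 by simp
    have fl2': "real_of_int \<lfloor>R\<^sup>2\<rfloor> \<ge> 1" using fl2 by simp
    have "real M \<ge> 1" using Meq fl2' by simp
    then have M1: "M \<ge> 1" by (metis of_nat_1 of_nat_le_iff)
    have MR: "real M \<le> R\<^sup>2" using Meq fl3 by simp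
    have h1: "R\<^sup>2 < real M + 1" using Meq fl1 by simp
    have h2: "real M + 1 \<le> 2 * real M" using Meq fl2' by simp
    have R2M: "R\<^sup>2 \<le> 2 * real M" using less_le_trans[OF h1 h2] by simp
    then have MR2: "real M \<ge> R\<^sup>2 / 2" by simp
    have "of_int (int Nn) \<le> R\<^sup>2" using Nn by simp
    then have "int Nn \<le> \<lfloor>R\<^sup>2\<rfloor>" by (simp only: le_floor_iff)
    then have NM: "Nn \<le> M" unfolding M_def using fl2 by (simp add: le_nat_iff)
    have "Q (\<lambda>n. A (U n)) R Nn \<le> Q (\<lambda>n. A (U n)) R M" by (rule Q_mono_N[OF NM])
    also have "\<dots> \<le> (1 / real M + 1 / R\<^sup>2) * Q U (2*R+s) (2*M)"
      by (rule Qstep[OF U]) (use R M1 in auto)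
    also have "\<dots> \<le> (3 / R\<^sup>2) * (K' * (1 + (2*R+s)) powr \<beta>)"
    proof (rule mult_mono)
      have "R\<^sup>2 > 0" using R by simp
      moreover have "real M > 0" using M1 by simp
      ultimately have "1 / real M \<le> 2 / R\<^sup>2" using R2M by (simp add: divide_simps)
      then show "1 / real M + 1 / R\<^sup>2 \<le> 3 / R\<^sup>2" by simp
      have ex: "(2 * R + s)\<^sup>2 = 4 * R\<^sup>2 + 4 * (R * s) + s * s" by (simp add: power2_eq_square algebra_simps)
      have "R * s \<ge> 0" using R s0 by simp
      then have "real (2 * M) \<le> (2*R+s)\<^sup>2" using MR unfolding ex
        using zero_le_power2[of R] mult_nonneg_nonneg[OF s0 s0] by linarith
      then have "Q U (2*R+s) (2*M) \<le> K * (1 + (2*R+s)) powr \<beta>"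
        using K[of "2*R+s" "2*M"] R s0 by auto
      also have "\<dots> \<le> K' * (1 + (2*R+s)) powr \<beta>"
        unfolding K'_def by (intro mult_right_mono) auto
      finally show "Q U (2*R+s) (2*M) \<le> K' * (1 + (2*R+s)) powr \<beta>" .
      show "0 \<le> 3 / R\<^sup>2" by simp
      show "0 \<le> Q U (2*R+s) (2*M)" by (rule Q_nonneg)
    qed
    also have "(1 + (2*R+s)) powr \<beta> \<le> c * (1 + R) powr \<beta>"
    proof (cases "\<beta> \<ge> 0")
      case True
      have "(1 + (2*R+s)) powr \<beta> \<le> ((2 + s) * (1 + R)) powr \<beta>"
        by (rule powr_mono2) (use True R s0 in \<open>auto simp: algebra_simps\<close>)
      also have "\<dots> = (2 + s) powr \<beta> * (1 + R) powr \<beta>" by (rule powr_mult)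
      also have "\<dots> \<le> c * (1 + R) powr \<beta>" unfolding c_def by (intro mult_right_mono) auto
      finally show ?thesis .
    next
      case False
      have "(1 + (2*R+s)) powr \<beta> \<le> (1 + R) powr \<beta>"
        by (rule powr_mono2') (use False R s0 in auto)
      also have "\<dots> \<le> c * (1 + R) powr \<beta>" using mult_right_mono[OF c1, of "(1 + R) powr \<beta>"] by simp
      finally show ?thesis .
    qed
    then have "(3 / R\<^sup>2) * (K' * (1 + (2*R+s)) powr \<beta>) \<le> (3 / R\<^sup>2) * (K' * (c * (1 + R) powr \<beta>))"
      using K'0 by (intro mult_left_mono) auto
    also have "\<dots> \<le> (12 / (1 + R)\<^sup>2) * (K' * (c * (1 + R) powr \<beta>))"
    proof (rule mult_right_mono)
      have "(3*R+1)*(R-1) \<ge> 0" using R by (intro mult_nonneg_nonneg) auto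
      moreover have "(3*R+1)*(R-1) = 3 * R\<^sup>2 - 2 * R - 1" by (simp add: power2_eq_square algebra_simps)
      moreover have "(1 + R)\<^sup>2 = 1 + 2 * R + R\<^sup>2" by (simp add: power2_eq_square algebra_simps)
      ultimately have "(1 + R)\<^sup>2 \<le> 4 * R\<^sup>2" by linarith
      then show "3 / R\<^sup>2 \<le> 12 / (1 + R)\<^sup>2" using R by (simp add: field_simps)
      show "0 \<le> K' * (c * (1 + R) powr \<beta>)" using K'0 c1 by simp
    qed
    also have "\<dots> = (12 * K' * c) * ((1 + R) powr \<beta> / (1 + R) powr 2)"
      using R by simp
    also have "\<dots> = (12 * K' * c) * (1 + R) powr (\<beta> - 2)" by (simp add: powr_diff)
    finally show ?thesis .
  qed
  then show ?thesis unfolding Gr_def by blast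
qed

lemma Gr_iter:
  assumes U: "sol U" and G: "Gr U \<beta>"
  shows "Gr (\<lambda>n. (A ^^ j) (U n)) (\<beta> - 2 * real j)"
proof (induction j)
  case 0
  then show ?case using G by simp
next
  case (Suc j)
  have "Gr (\<lambda>n. A ((A ^^ j) (U n))) (\<beta> - 2 * real j - 2)"
    by (rule Gr_step[OF sol_Aj[OF U] Suc.IH])
  then show ?case by (simp add: algebra_simps)
qed

lemma Gr_vanish:
  assumes G: "Gr W \<gamma>" and g: "\<gamma> < 0"
  shows "W n x = 0"
proof -
  obtain K where K: "\<And>R Nn. R \<ge> 1 \<Longrightarrow> real Nn \<le> R\<^sup>2 \<Longrightarrow> Q W R Nn \<le> K * (1 + R) powr \<gamma>"
    using G unfolding Gr_def by blast
  define K' where "K' = max K 0"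
  have "m x * (W n x)\<^sup>2 = 0"
  proof (rule zero_by_decay[where e = "- \<gamma>" and K = K'])
    show "0 < - \<gamma>" using g by simp
    fix R assume R: "R \<ge> max 1 (max (\<rho> x x0) (real n + 1))"
    have R1: "R \<ge> 1" using R by simp
    have xB: "x \<in> B R" unfolding B_def rball_def using R by simp
    have "real (Suc n) \<le> R" using R by simp
    also have "R \<le> R\<^sup>2" using R1 by (simp add: power2_eq_square)
    finally have nR: "real (Suc n) \<le> R\<^sup>2" .
    have "m x * (W n x)\<^sup>2 \<le> (\<Sum>y\<in>B R. m y * (W n y)\<^sup>2)"
      by (rule member_le_sum[OF xB]) (auto simp: less_imp_le[OF m_pos] finB)
    also have "\<dots> \<le> Q W R (Suc n)" unfolding Q_def
      by (rule member_le_sum[where f="\<lambda>k. \<Sum>y\<in>B R. m y * (W k y)\<^sup>2" and i=n and A="{..<Suc n}"])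
         (auto intro!: sum_nonneg simp: less_imp_le[OF m_pos])
    also have "\<dots> \<le> K * (1 + R) powr \<gamma>" by (rule K[OF R1 nR])
    also have "\<dots> \<le> K' * (1 + R) powr \<gamma>" unfolding K'_def by (intro mult_right_mono) auto
    also have "\<dots> \<le> K' * R powr \<gamma>"
      by (intro mult_left_mono powr_mono2') (use g R1 K'_def in auto)
    finally have "m x * (W n x)\<^sup>2 \<le> K' * R powr - (- \<gamma>)" by simp
    moreover have "m x * (W n x)\<^sup>2 \<ge> 0" by (simp add: less_imp_le[OF m_pos])
    ultimately show "\<bar>m x * (W n x)\<^sup>2\<bar> \<le> K' * R powr - (- \<gamma>)" by simp
  qed
  then show ?thesis using m_pos[of x] by simp
qed

lemma Gr_init:
  assumes bound: "\<And>R x n. R > 0 \<Longrightarrow> x \<in> B R \<Longrightarrow> real n \<le> R\<^sup>2 \<Longrightarrow> \<bar>U n x\<bar> \<le> C * (1 + R) powr p"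
    and vol: "\<And>R. R > 0 \<Longrightarrow> (\<Sum>y\<in>B R. m y) \<le> CV * (1 + R) powr a"
    and a: "a \<ge> 0" and C: "C \<ge> 0"
  shows "Gr U (2 * p + a + 2)"
proof -
  have "Q U R Nn \<le> (\<bar>CV\<bar> * C\<^sup>2) * (1 + R) powr (2 * p + a + 2)"
    if R: "R \<ge> 1" and Nn: "real Nn \<le> R\<^sup>2" for R Nn
  proof -
    define M where "M = C * (1 + R) powr p"
    have M0: "M \<ge> 0" unfolding M_def using C by simp
    have sq: "(U n x)\<^sup>2 \<le> M\<^sup>2" if "n < Nn" "x \<in> B R" for n x
    proof -
      have "real n \<le> R\<^sup>2" using that Nn by linarith
      then have "\<bar>U n x\<bar> \<le> M" unfolding M_def using bound[of R x n] R that by auto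
      then have "\<bar>U n x\<bar>\<^sup>2 \<le> M\<^sup>2" by (intro power_mono) auto
      then show ?thesis by simp
    qed
    have "Q U R Nn \<le> (\<Sum>n<Nn. \<Sum>x\<in>B R. m x * M\<^sup>2)" unfolding Q_def
      by (intro sum_mono mult_left_mono) (use sq in \<open>auto simp: less_imp_le[OF m_pos]\<close>)
    also have "\<dots> = real Nn * (\<Sum>x\<in>B R. m x) * M\<^sup>2" by (simp add: sum_distrib_right)
    also have "\<dots> \<le> (1 + R)\<^sup>2 * (\<bar>CV\<bar> * (1 + R) powr a) * M\<^sup>2"
    proof (intro mult_right_mono mult_mono)
      have "(1 + R)\<^sup>2 = 1 + 2 * R + R\<^sup>2" by (simp add: power2_eq_square algebra_simps)
      then show "real Nn \<le> (1 + R)\<^sup>2" using Nn R by simp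
      have "(\<Sum>x\<in>B R. m x) \<le> CV * (1 + R) powr a" using vol R by auto
      also have "\<dots> \<le> \<bar>CV\<bar> * (1 + R) powr a" by (intro mult_right_mono) auto
      finally show "(\<Sum>x\<in>B R. m x) \<le> \<bar>CV\<bar> * (1 + R) powr a" .
      show "0 \<le> (1 + R)\<^sup>2" by simp
      show "0 \<le> (\<Sum>x\<in>B R. m x)" by (intro sum_nonneg) (simp add: less_imp_le[OF m_pos])
      show "0 \<le> M\<^sup>2" by simp
    qed
    also have "\<dots> = (\<bar>CV\<bar> * C\<^sup>2) * ((1 + R) powr 2 * (1 + R) powr a * ((1 + R) powr p * (1 + R) powr p))"
      unfolding M_def using R by (simp add: power2_eq_square algebra_simps)
    also have "\<dots> = (\<bar>CV\<bar> * C\<^sup>2) * (1 + R) powr (2 * p + a + 2)"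
      by (simp add: powr_add[symmetric] algebra_simps)
    finally show ?thesis .
  qed
  then show ?thesis unfolding Gr_def by blast
qed

lemma analytic:
  assumes U: "sol U"
    and bound: "\<And>R x n. R > 0 \<Longrightarrow> x \<in> B R \<Longrightarrow> real n \<le> R\<^sup>2 \<Longrightarrow> \<bar>U n x\<bar> \<le> C * (1 + R) powr p"
    and vol: "\<And>R. R > 0 \<Longrightarrow> (\<Sum>y\<in>B R. m y) \<le> CV * (1 + R) powr a"
    and a: "a \<ge> 0" and C: "C \<ge> 0"
  shows "\<exists>J. \<forall>n x. (A ^^ J) (U n) x = 0"
proof -
  define \<beta> where "\<beta> = 2 * p + a + 2"
  have G: "Gr U \<beta>" unfolding \<beta>_def by (rule Gr_init[OF bound vol a C])
  define J where "J = nat \<lceil>\<beta>\<rceil> + 1"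
  have "\<beta> \<le> real (nat \<lceil>\<beta>\<rceil>)" by (rule real_nat_ceiling_ge)
  then have "\<beta> - 2 * real J < 0" unfolding J_def by simp
  then have "\<forall>n x. (A ^^ J) (U n) x = 0"
    using Gr_vanish[OF Gr_iter[OF U G, of J]] by blast
  then show ?thesis by blast
qed

end


context gr begin

lemma Aj_A: "(A ^^ i) (A f) = (A ^^ Suc i) f"
  by (simp add: funpow_swap1)

lemma sol_step_Aj: "sol U \<Longrightarrow> (A ^^ i) (U (Suc n)) x = (A ^^ i) (U n) x + (A ^^ Suc i) (U n) x"
  unfolding sol_def by (simp add: Aj_add Aj_A)

lemma seq_fdiff:
  assumes U: "sol U"
  shows "((fdiff 1) ^^ i) (\<lambda>n. U n x) = (\<lambda>n. (A ^^ i) (U n) x)"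
proof (induction i)
  case 0
  then show ?case by simp
next
  case (Suc i)
  have "((fdiff 1) ^^ Suc i) (\<lambda>n. U n x) = fdiff 1 (((fdiff 1) ^^ i) (\<lambda>n. U n x))" by simp
  also have "\<dots> = (\<lambda>n. (A ^^ Suc i) (U n) x)"
    unfolding Suc.IH fdiff_def by (rule ext) (simp add: sol_step_Aj[OF U])
  finally show ?case .
qed

lemma fine:
  assumes U: "sol U" and C: "C \<ge> 0" and k: "k \<ge> 0"
    and bound: "\<And>R x n. R > 0 \<Longrightarrow> x \<in> B R \<Longrightarrow> real n \<le> R\<^sup>2 \<Longrightarrow> \<bar>U n x\<bar> \<le> C * (1 + R) powr (2 * k)"
    and j: "real j > k" and j1: "j \<ge> 1"
    and van: "\<And>n x. (A ^^ Suc j) (U n) x = 0"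
  shows "(A ^^ j) (U n) x = 0"
proof -
  define a where "a = (\<lambda>n. U n x)"
  define c where "c = (A ^^ j) (U 0) x"
  have const: "(A ^^ j) (U n) x = c" for n
  proof (induction n)
    case 0 then show ?case by (simp add: c_def)
  next
    case (Suc n) then show ?case using sol_step_Aj[OF U, of j n x] van by simp
  qed
  have dj: "((fdiff 1) ^^ j) a n = c" for n
    unfolding a_def seq_fdiff[OF U] using const by simp
  define K where "K = 2 ^ j * C * 2 powr (2 * k) * (2 * real j) ^ j"
  have "c = 0"
  proof (rule zero_by_decay[where e = "2 * real j - 2 * k" and K = K and Rlow = "max (\<rho> x x0) (2 * real j)"])
    show "0 < 2 * real j - 2 * k" using j by simp
    fix R assume R: "R \<ge> max (\<rho> x x0) (2 * real j)"
    have j1': "real j \<ge> 1" using j1 by simp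
    have R1: "R \<ge> 1" and R2j: "R \<ge> 2 * real j" using R j1' by auto
    have R0: "R > 0" using R1 by simp
    have xB: "x \<in> B R" unfolding B_def rball_def using R by simp
    define y where "y = R\<^sup>2 / real j"
    have "R\<^sup>2 \<ge> 2 * real j * 1" unfolding power2_eq_square using R1 R2j
      by (intro mult_mono) auto
    then have y2: "y \<ge> 2" unfolding y_def using j1' by (simp add: field_simps)
    define h where "h = nat \<lfloor>y\<rfloor>"
    have fl1: "y < real_of_int \<lfloor>y\<rfloor> + 1" by (rule real_of_int_floor_add_one_gt)
    have fl3: "real_of_int \<lfloor>y\<rfloor> \<le> y" by (rule of_int_floor_le)
    have fl2: "\<lfloor>y\<rfloor> \<ge> 0" using y2 by simp
    have heq: "real h = real_of_int \<lfloor>y\<rfloor>" unfolding h_def using fl2 by simp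
    have hy: "real h \<le> y" using heq fl3 by simp
    have hy2a: "y / 2 \<le> y - 1" using y2 by simp
    have hy2b: "y - 1 < real_of_int \<lfloor>y\<rfloor>" using fl1 by simp
    have hy2: "real h \<ge> y / 2" using order.trans[OF hy2a less_imp_le[OF hy2b]] heq by simp
    have jh: "real (j * h) \<le> R\<^sup>2"
    proof -
      have "real (j * h) = real j * real h" by simp
      also have "\<dots> \<le> real j * y" using hy by (intro mult_left_mono) auto
      also have "\<dots> = R\<^sup>2" unfolding y_def using j1' by simp
      finally show ?thesis .
    qed
    define M where "M = C * (1 + R) powr (2 * k)"
    have abound: "\<bar>a m'\<bar> \<le> M" if "0 \<le> m'" "m' \<le> 0 + j * h" for m'
    proof -
      have "m' \<le> j * h" using that by simp
      then have "real m' \<le> real (j * h)" by (simp only: of_nat_le_iff)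
      then have "real m' \<le> R\<^sup>2" using jh by linarith
      then show ?thesis unfolding a_def M_def using bound[OF R0 xB] by blast
    qed
    have "\<bar>((fdiff h) ^^ j) a 0\<bar> \<le> 2 ^ j * M" by (rule fdiff_bound) (use abound in auto)
    moreover have "((fdiff h) ^^ j) a 0 = real h ^ j * c" by (rule fdiff_step_h) (use dj in auto)
    ultimately have ch: "\<bar>c\<bar> * real h ^ j \<le> 2 ^ j * M" by (simp add: abs_mult mult.commute)
    have "y / 2 = R ^ 2 / (2 * real j)" unfolding y_def by simp
    then have hpow: "(R ^ 2 / (2 * real j)) ^ j \<le> real h ^ j"
      using hy2 y2 by (intro power_mono) auto
    have "M \<le> C * (2 powr (2 * k) * R powr (2 * k))"
    proof -
      have "(1 + R) powr (2 * k) \<le> (2 * R) powr (2 * k)"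
        by (rule powr_mono2) (use k R1 in auto)
      also have "\<dots> = 2 powr (2 * k) * R powr (2 * k)" by (rule powr_mult)
      finally show ?thesis unfolding M_def using C by (intro mult_left_mono) auto
    qed
    have "\<bar>c\<bar> * (R ^ 2 / (2 * real j)) ^ j \<le> \<bar>c\<bar> * real h ^ j"
      by (intro mult_left_mono hpow) auto
    also have "\<dots> \<le> 2 ^ j * M" by (rule ch)
    also have "\<dots> \<le> 2 ^ j * (C * (2 powr (2 * k) * R powr (2 * k)))"
      using \<open>M \<le> _\<close> by (intro mult_left_mono) auto
    finally have c1: "\<bar>c\<bar> * (R ^ 2 / (2 * real j)) ^ j \<le> 2 ^ j * (C * (2 powr (2 * k) * R powr (2 * k)))" .
    have pj: "(R ^ 2 / (2 * real j)) ^ j = R powr (2 * real j) / (2 * real j) ^ j"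
    proof -
      have "(R ^ 2 / (2 * real j)) ^ j = (R ^ 2) ^ j / (2 * real j) ^ j" by (rule power_divide)
      also have "(R ^ 2) ^ j = R ^ (2 * j)" by (simp add: power_mult)
      also have "R ^ (2 * j) = R powr (real (2 * j))" using powr_realpow[OF R0, of "2 * j"] by simp
      finally show ?thesis by simp
    qed
    have pos: "R powr (2 * real j) / (2 * real j) ^ j > 0" using R0 j1' by simp
    have "\<bar>c\<bar> \<le> 2 ^ j * (C * (2 powr (2 * k) * R powr (2 * k))) / (R powr (2 * real j) / (2 * real j) ^ j)"
      using c1 unfolding pj by (simp only: pos_le_divide_eq[OF pos])
    also have "\<dots> = K * (R powr (2 * k) / R powr (2 * real j))"
      unfolding K_def using R0 j1' by (simp add: field_simps)
    also have "\<dots> = K * R powr - (2 * real j - 2 * k)"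
      by (simp add: powr_diff[symmetric])
    finally show "\<bar>c\<bar> \<le> K * R powr - (2 * real j - 2 * k)" .
  qed
  then show ?thesis using const by simp
qed

lemma descend:
  assumes U: "sol U" and C: "C \<ge> 0" and k: "k \<ge> 0"
    and bound: "\<And>R x n. R > 0 \<Longrightarrow> x \<in> B R \<Longrightarrow> real n \<le> R\<^sup>2 \<Longrightarrow> \<bar>U n x\<bar> \<le> C * (1 + R) powr (2 * k)"
    and KK: "real (Suc K) > k"
  shows "(\<forall>n x. (A ^^ J) (U n) x = 0) \<Longrightarrow> (\<forall>n x. (A ^^ Suc K) (U n) x = 0)"
proof (induction J)
  case 0
  then have "U n = (\<lambda>x. 0)" for n by auto
  then show ?case by (simp add: Aj_zero A_zero)
next
  case (Suc J)
  show ?case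
  proof (cases "Suc J \<le> Suc K")
    case True
    then obtain d where d: "Suc K = d + Suc J" by (metis le_add_diff_inverse2)
    have "(A ^^ Suc K) (U n) = (A ^^ d) ((A ^^ Suc J) (U n))" for n
      unfolding d funpow_add by simp
    moreover have "(A ^^ Suc J) (U n) = (\<lambda>x. 0)" for n using Suc.prems by auto
    ultimately show ?thesis by (simp add: Aj_zero)
  next
    case False
    then have "real J > k" using KK by linarith
    moreover have "J \<ge> 1" using False by simp
    ultimately have "\<forall>n x. (A ^^ J) (U n) x = 0"
      using fine[OF U C k bound] Suc.prems by blast
    then show ?thesis by (rule Suc.IH)
  qed
qed

end


context gr begin

definition Ub :: "('v \<times> int \<Rightarrow> real) \<Rightarrow> nat \<Rightarrow> 'v \<Rightarrow> real" where
  "Ub v n x = v (x, - int n)"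

definition abound :: "('v \<times> int \<Rightarrow> real) \<Rightarrow> real \<Rightarrow> real \<Rightarrow> bool" where
  "abound v C p \<longleftrightarrow> (\<forall>R>0. \<forall>x\<in>B R. \<forall>t::int. - (R\<^sup>2) \<le> real_of_int t \<and> t \<le> 0 \<longrightarrow>
      \<bar>v (x, t)\<bar> \<le> C * (1 + R) powr p)"

lemma anc_sol:
  assumes "v \<in> ancient_poly m w \<rho> p"
  shows "sol (Ub v)"
  unfolding sol_def
proof (intro allI ext)
  fix n x
  have "- int n \<le> 0" by simp
  then have eq: "v (x, - int n) - v (x, - int n - 1) = laplacian m w (\<lambda>y. v (y, - int n)) x"
    using assms unfolding ancient_poly_def by blast
  have e1: "Ub v n = (\<lambda>y. v (y, - int n))" unfolding Ub_def by (rule ext) simp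
  have e2: "- int (Suc n) = - int n - 1" by simp
  have "Ub v (Suc n) x = v (x, - int n - 1)" by (simp only: Ub_def e2)
  then show "Ub v (Suc n) x = Ub v n x + A (Ub v n) x"
    using eq unfolding e1 lap_A by (simp add: Ub_def)
qed

lemma recenter:
  assumes p: "p \<ge> 0"
    and b: "\<forall>R>0. \<forall>x\<in>rball \<rho> x1 R. \<forall>t::int. - (R\<^sup>2) \<le> real_of_int t \<and> t \<le> 0 \<longrightarrow>
        \<bar>v (x, t)\<bar> \<le> C1 * (1 + R) powr p"
  shows "\<exists>C\<ge>0. abound v C p"
proof -
  define c where "c = \<rho> x0 x1"
  have c0: "c \<ge> 0" unfolding c_def by (rule rho_nonneg)
  define C where "C = \<bar>C1\<bar> * (1 + c) powr p"
  have "abound v C p" unfolding abound_def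
  proof (intro allI impI ballI)
    fix R x and t :: int
    assume R: "R > 0" and x: "x \<in> B R" and t: "- (R\<^sup>2) \<le> real_of_int t \<and> t \<le> 0"
    have "\<rho> x x1 \<le> \<rho> x x0 + \<rho> x0 x1" by (rule rho_tri)
    then have x1: "x \<in> rball \<rho> x1 (R + c)" using x unfolding B_def rball_def c_def by simp
    have "R\<^sup>2 \<le> (R + c)\<^sup>2" using R c0 by (intro power_mono) auto
    then have t': "- ((R + c)\<^sup>2) \<le> real_of_int t \<and> t \<le> 0" using t by linarith
    have "\<bar>v (x, t)\<bar> \<le> C1 * (1 + (R + c)) powr p" using b R c0 x1 t' by auto
    also have "\<dots> \<le> \<bar>C1\<bar> * (1 + (R + c)) powr p" by (intro mult_right_mono) auto
    also have "(1 + (R + c)) powr p \<le> ((1 + c) * (1 + R)) powr p"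
      by (rule powr_mono2) (use p R c0 in \<open>auto simp: algebra_simps\<close>)
    also have "\<dots> = (1 + c) powr p * (1 + R) powr p" by (rule powr_mult)
    finally show "\<bar>v (x, t)\<bar> \<le> C * (1 + R) powr p" unfolding C_def
      by (simp add: mult_left_mono mult.assoc)
  qed
  moreover have "C \<ge> 0" unfolding C_def by simp
  ultimately show ?thesis by blast
qed

lemma anc_abound:
  assumes "v \<in> ancient_poly m w \<rho> p" "p \<ge> 0"
  shows "\<exists>C\<ge>0. abound v C p"
proof -
  obtain x1 C1 where "\<forall>R>0. \<forall>x\<in>rball \<rho> x1 R. \<forall>t::int. - (R\<^sup>2) \<le> real_of_int t \<and> t \<le> 0 \<longrightarrow>
        \<bar>v (x, t)\<bar> \<le> C1 * (1 + R) powr p"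
    using assms(1) unfolding ancient_poly_def by blast
  then show ?thesis by (rule recenter[OF assms(2)])
qed

lemma abound_Ub:
  assumes "abound v C p" "R > 0" "x \<in> B R" "real n \<le> R\<^sup>2"
  shows "\<bar>Ub v n x\<bar> \<le> C * (1 + R) powr p"
proof -
  have "- (R\<^sup>2) \<le> real_of_int (- int n) \<and> - int n \<le> 0" using assms(4) by simp
  then show ?thesis using assms(1-3) unfolding abound_def Ub_def by blast
qed

lemma anc_intro:
  assumes "\<forall>x t. t > 0 \<longrightarrow> v (x, t) = 0"
    "\<forall>x t. t \<le> 0 \<longrightarrow> v (x, t) - v (x, t - 1) = - A (\<lambda>y. v (y, t)) x"
    "abound v C p"
  shows "v \<in> ancient_poly m w \<rho> p"
  unfolding ancient_poly_def using assms
  by (auto simp: lap_A abound_def B_def intro!: exI[of _ x0] exI[of _ C])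

lemma P_subspace:
  assumes p: "p \<ge> 0"
  shows "fs.subspace (ancient_poly m w \<rho> p)"
proof (rule fs.subspaceI)
  show "0 \<in> ancient_poly m w \<rho> p"
    by (rule anc_intro[where C = 0]) (auto simp: A_zero abound_def)
  fix v1 v2 assume v1: "v1 \<in> ancient_poly m w \<rho> p" and v2: "v2 \<in> ancient_poly m w \<rho> p"
  obtain C1 where C1: "abound v1 C1 p" using anc_abound[OF v1 p] by blast
  obtain C2 where C2: "abound v2 C2 p" using anc_abound[OF v2 p] by blast
  show "v1 + v2 \<in> ancient_poly m w \<rho> p"
  proof (rule anc_intro[where C = "C1 + C2"])
    show "\<forall>x t. t > 0 \<longrightarrow> (v1 + v2) (x, t) = 0" using v1 v2 unfolding ancient_poly_def by simp
    show "\<forall>x t. t \<le> 0 \<longrightarrow> (v1 + v2) (x, t) - (v1 + v2) (x, t - 1) = - A (\<lambda>y. (v1 + v2) (y, t)) x"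
    proof (intro allI impI)
      fix x and t :: int assume t: "t \<le> 0"
      have "v1 (x, t) - v1 (x, t - 1) = - A (\<lambda>y. v1 (y, t)) x"
        using v1 t unfolding ancient_poly_def lap_A by blast
      moreover have "v2 (x, t) - v2 (x, t - 1) = - A (\<lambda>y. v2 (y, t)) x"
        using v2 t unfolding ancient_poly_def lap_A by blast
      moreover have "A (\<lambda>y. (v1 + v2) (y, t)) x = A (\<lambda>y. v1 (y, t)) x + A (\<lambda>y. v2 (y, t)) x"
        using A_add[of "\<lambda>y. v1 (y, t)" "\<lambda>y. v2 (y, t)"] by (simp add: fun_eq_iff)
      ultimately show "(v1 + v2) (x, t) - (v1 + v2) (x, t - 1) = - A (\<lambda>y. (v1 + v2) (y, t)) x"
        by simp
    qed
    show "abound (v1 + v2) (C1 + C2) p"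
      using C1 C2 unfolding abound_def
      by (smt (verit, ccfv_threshold) distrib_right plus_fun_apply)
  qed
next
  fix c and v assume v: "v \<in> ancient_poly m w \<rho> p"
  obtain C1 where C1: "abound v C1 p" using anc_abound[OF v p] by blast
  show "fscale c v \<in> ancient_poly m w \<rho> p"
  proof (rule anc_intro[where C = "\<bar>c\<bar> * C1"])
    show "\<forall>x t. t > 0 \<longrightarrow> fscale c v (x, t) = 0" using v unfolding ancient_poly_def fscale_def by simp
    show "\<forall>x t. t \<le> 0 \<longrightarrow> fscale c v (x, t) - fscale c v (x, t - 1) = - A (\<lambda>y. fscale c v (y, t)) x"
      using v unfolding ancient_poly_def fscale_def by (simp add: A_scale lap_A right_diff_distrib[symmetric])
    show "abound (fscale c v) (\<bar>c\<bar> * C1) p"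
      using C1 unfolding abound_def fscale_def
      by (auto simp: abs_mult mult.assoc intro!: mult_left_mono)
  qed
qed

lemma U0: "Ub v 0 = (\<lambda>x. v (x, 0))"
  unfolding Ub_def by simp

lemma P_top:
  assumes v: "v \<in> ancient_poly m w \<rho> (2 * k)" and k: "k \<ge> 0"
    and vol: "\<And>R. R > 0 \<Longrightarrow> (\<Sum>y\<in>B R. m y) \<le> CV * (1 + R) powr a" and a: "a \<ge> 0"
    and KK: "real (Suc K) > k"
  shows "(A ^^ Suc K) (\<lambda>x. v (x, 0)) = (\<lambda>x. 0)"
proof -
  have p: "2 * k \<ge> 0" using k by simp
  obtain C where C: "C \<ge> 0" "abound v C (2 * k)" using anc_abound[OF v p] by blast
  have U: "sol (Ub v)" by (rule anc_sol[OF v])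
  have bound: "\<And>R x n. R > 0 \<Longrightarrow> x \<in> B R \<Longrightarrow> real n \<le> R\<^sup>2 \<Longrightarrow> \<bar>Ub v n x\<bar> \<le> C * (1 + R) powr (2 * k)"
    using abound_Ub[OF C(2)] by blast
  obtain J where "\<forall>n x. (A ^^ J) (Ub v n) x = 0"
    using analytic[OF U bound vol a C(1)] by blast
  then have "\<forall>n x. (A ^^ Suc K) (Ub v n) x = 0"
    using descend[OF U C(1) k bound KK] by blast
  then have h: "\<And>x. (A ^^ Suc K) (Ub v 0) x = 0" by blast
  show ?thesis
  proof (rule ext)
    fix x show "(A ^^ Suc K) (\<lambda>x. v (x, 0)) x = 0" using h[of x] unfolding U0 .
  qed
qed

lemma P_harm:
  assumes v: "v \<in> ancient_poly m w \<rho> (2 * k)" and k: "k \<ge> 0"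
    and z: "(A ^^ Suc i) (\<lambda>x. v (x, 0)) = (\<lambda>x. 0)"
  shows "(A ^^ i) (\<lambda>x. v (x, 0)) \<in> harm_poly m w \<rho> (2 * k)"
proof -
  have p: "2 * k \<ge> 0" using k by simp
  obtain C where C: "C \<ge> 0" "abound v C (2 * k)" using anc_abound[OF v p] by blast
  have U: "sol (Ub v)" by (rule anc_sol[OF v])
  have harm: "laplacian m w ((A ^^ i) (\<lambda>x. v (x, 0))) x = 0" for x
    using z unfolding lap_A by (simp add: fun_eq_iff)
  define C' where "C' = 2 ^ i * (C * (2 + real i) powr (2 * k))"
  have "\<bar>(A ^^ i) (\<lambda>x. v (x, 0)) x\<bar> \<le> C' * (1 + R) powr (2 * k)"
    if R: "R > 0" and x: "x \<in> rball \<rho> x0 R" for R x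
  proof -
    define R' where "R' = R + real i + 1"
    have R'0: "R' > 0" "R' \<ge> 1" unfolding R'_def using R by auto
    have xB: "x \<in> B R'" using x R unfolding B_def rball_def R'_def by simp
    define M where "M = C * (2 + real i) powr (2 * k) * (1 + R) powr (2 * k)"
    have bnd: "\<bar>Ub v m' x\<bar> \<le> M" if "0 \<le> m'" "m' \<le> 0 + i * 1" for m'
    proof -
      have "real m' \<le> R'" using that R unfolding R'_def by simp
      also have "R' \<le> R'\<^sup>2" using R'0 by (simp add: power2_eq_square)
      finally have "\<bar>Ub v m' x\<bar> \<le> C * (1 + R') powr (2 * k)"
        using abound_Ub[OF C(2) R'0(1) xB] by blast
      also have "(1 + R') powr (2 * k) \<le> ((2 + real i) * (1 + R)) powr (2 * k)"
        by (rule powr_mono2) (use k R in \<open>auto simp: R'_def algebra_simps\<close>)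
      also have "\<dots> = (2 + real i) powr (2 * k) * (1 + R) powr (2 * k)" by (rule powr_mult)
      finally show ?thesis unfolding M_def using C(1) by (simp add: mult_left_mono mult.assoc)
    qed
    have "(A ^^ i) (\<lambda>x. v (x, 0)) x = ((fdiff 1) ^^ i) (\<lambda>n. Ub v n x) 0"
      unfolding seq_fdiff[OF U] U0[symmetric] by simp
    also have "\<bar>\<dots>\<bar> \<le> 2 ^ i * M" by (rule fdiff_bound) (use bnd in auto)
    finally show ?thesis unfolding M_def C'_def by (simp add: mult.assoc)
  qed
  then show ?thesis unfolding harm_poly_def using harm by blast
qed

lemma P_inj:
  assumes v: "v \<in> ancient_poly m w \<rho> p" and z: "(\<lambda>x. v (x, 0)) = (\<lambda>x. 0)"
  shows "v = 0"
proof -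
  have U: "sol (Ub v)" by (rule anc_sol[OF v])
  have Un: "Ub v n = (\<lambda>x. 0)" for n
  proof (induction n)
    case 0 then show ?case using U0[of v] z by simp
  next
    case (Suc n) then show ?case using U unfolding sol_def by (simp add: A_zero)
  qed
  show "v = 0"
  proof (rule ext)
    fix q :: "'v \<times> int"
    obtain x t where q: "q = (x, t)" by fastforce
    show "v q = 0 q"
    proof (cases "t > 0")
      case True then show ?thesis using v q unfolding ancient_poly_def by simp
    next
      case False
      then have "t = - int (nat (- t))" by simp
      then have "v (x, t) = Ub v (nat (- t)) x" unfolding Ub_def by simp
      then show ?thesis using Un q by simp
    qed
  qed
qed

lemma L_hom: "module_hom fscale fscale (\<lambda>v::'v \<times> int \<Rightarrow> real. (A ^^ i) (\<lambda>x. v (x, 0)))"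
  unfolding module_hom_iff
proof (intro conjI allI)
  show "module (fscale :: real \<Rightarrow> ('v \<times> int \<Rightarrow> real) \<Rightarrow> _)"
    using fscale_vs module_iff_vector_space by blast
  show "module (fscale :: real \<Rightarrow> ('v \<Rightarrow> real) \<Rightarrow> _)"
    using fscale_vs module_iff_vector_space by blast
  fix x y :: "'v \<times> int \<Rightarrow> real" and c :: real
  show "(A ^^ i) (\<lambda>z. (x + y) (z, 0)) = (A ^^ i) (\<lambda>z. x (z, 0)) + (A ^^ i) (\<lambda>z. y (z, 0))"
    by (simp add: Aj_add plus_fun_def)
  show "(A ^^ i) (\<lambda>z. fscale c x (z, 0)) = fscale c ((A ^^ i) (\<lambda>z. x (z, 0)))"
    by (simp add: Aj_scale fscale_def)
qed

end


theorem theorem1p3: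
  fixes m :: "'v \<Rightarrow> real" and w :: "'v \<Rightarrow> 'v \<Rightarrow> real" and \<rho> :: "'v \<Rightarrow> 'v \<Rightarrow> real"
    and k :: real
  assumes "weighted_graph m w"
    and "intrinsic m w \<rho>"
    and "\<forall>x R. R > 0 \<longrightarrow> finite (rball \<rho> x R)"
    and "\<exists>s. \<forall>x y. adj w x y \<longrightarrow> \<rho> x y \<le> s"
    and "\<exists>x0 \<alpha> C. \<forall>R>0. (\<Sum>y\<in>rball \<rho> x0 R. m y) \<le> C * (1 + R) powr \<alpha>"
    and "k \<ge> 1"
  shows "fdim (ancient_poly m w \<rho> (2 * k)) \<le> ereal (k + 1) * fdim (harm_poly m w \<rho> (2 * k))"
proof -
  obtain s where s: "\<forall>x y. adj w x y \<longrightarrow> \<rho> x y \<le> s" using assms(4) by blast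
  obtain x0 \<alpha> CV where vol: "\<forall>R>0. (\<Sum>y\<in>rball \<rho> x0 R. m y) \<le> CV * (1 + R) powr \<alpha>"
    using assms(5) by blast
  interpret g: gr m w \<rho> x0 "max s 0"
    by unfold_locales (use assms(1-3) s in \<open>auto intro: order.trans[OF _ max.cobounded1]\<close>)
  have k0: "k \<ge> 0" using assms(6) by simp
  have vol': "(\<Sum>y\<in>g.B R. m y) \<le> \<bar>CV\<bar> * (1 + R) powr \<bar>\<alpha>\<bar>" if R: "R > 0" for R
  proof -
    have "(\<Sum>y\<in>g.B R. m y) \<le> CV * (1 + R) powr \<alpha>" using vol R unfolding g.B_def by auto
    also have "\<dots> \<le> \<bar>CV\<bar> * (1 + R) powr \<alpha>" by (intro mult_right_mono) auto
    also have "\<dots> \<le> \<bar>CV\<bar> * (1 + R) powr \<bar>\<alpha>\<bar>"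
      by (intro mult_left_mono powr_mono) (use R in auto)
    finally show ?thesis .
  qed
  define K where "K = nat \<lfloor>k\<rfloor>"
  have KK: "real (Suc K) > k" unfolding K_def using k0 by linarith
  have Kk: "real K \<le> k" unfolding K_def using k0 by linarith
  define P where "P = ancient_poly m w \<rho> (2 * k)"
  define H where "H = harm_poly m w \<rho> (2 * k)"
  define L where "L = (\<lambda>i (v :: 'v \<times> int \<Rightarrow> real). (g.A ^^ i) (\<lambda>x. v (x, 0)))"
  show ?thesis
  proof (cases "\<exists>B. finite B \<and> \<not> fs.dependent B \<and> fs.span B = fs.span H")
    case False
    then have "fdim H = \<infinity>" unfolding fdim_def by auto
    moreover have "ereal (k + 1) * \<infinity> = \<infinity>" using k0 by simp
    ultimately show ?thesis unfolding H_def[symmetric] P_def[symmetric] by simp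
  next
    case True
    then obtain BH where BH: "finite BH" "fs.independent BH" "fs.span BH = fs.span H" by blast
    have dimH: "fs.dim H = card BH" using fs.dim_eq_card[OF BH(3) BH(2)] .
    have fH: "fdim H = ereal (real (card BH))" unfolding fdim_def using True dimH by simp
    have sub: "fs.subspace P" unfolding P_def by (rule g.P_subspace) (use k0 in simp)
    have lin: "\<And>i. module_hom fscale fscale (L i)" unfolding L_def by (rule g.L_hom)
    have inj0: "\<And>v. v \<in> P \<Longrightarrow> L 0 v = 0 \<Longrightarrow> v = 0"
      unfolding L_def P_def by (rule g.P_inj) (auto simp: zero_fun_def)
    have top: "\<And>v. v \<in> P \<Longrightarrow> L (Suc K) v = 0"
      unfolding L_def P_def zero_fun_def
      by (rule g.P_top[OF _ k0 vol' _ KK]) auto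
    have harm: "\<And>i v. v \<in> P \<Longrightarrow> L (Suc i) v = 0 \<Longrightarrow> L i v \<in> fs.span H"
    proof -
      fix i v assume v: "v \<in> P" and z: "L (Suc i) v = 0"
      have "L i v \<in> H" unfolding L_def H_def
        by (rule g.P_harm) (use v z k0 in \<open>auto simp: L_def P_def zero_fun_def\<close>)
      then show "L i v \<in> fs.span H" by (rule fs.span_base)
    qed
    obtain T where T: "finite T" "card T \<le> Suc K * card BH" "P \<subseteq> fs.span T"
      using filtration_bound[where P=P and L=L and K=K and H=H and BH=BH, OF sub lin inj0 top harm BH(1) BH(3)] by blast
    obtain B where B: "B \<subseteq> P" "fs.independent B" "P \<subseteq> fs.span B"
      using fs.maximal_independent_subset by blast
    have "B \<subseteq> fs.span T" using B(1) T(3) by auto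
    then have Bfin: "finite B" "card B \<le> card T"
      using fs.independent_span_bound[OF T(1) B(2)] by auto
    have spanB: "fs.span B = fs.span P"
    proof
      show "fs.span B \<subseteq> fs.span P" using B(1) by (rule fs.span_mono)
      show "fs.span P \<subseteq> fs.span B" using fs.span_minimal[OF B(3) fs.subspace_span] .

    qed
    have dimP: "fs.dim P = card B" using fs.dim_eq_card[OF spanB B(2)] .
    have fP: "fdim P = ereal (real (card B))"
      unfolding fdim_def using Bfin(1) B(2) spanB dimP by auto
    have "real (card B) \<le> real (Suc K * card BH)" using Bfin(2) T(2) by linarith
    also have "\<dots> = (real K + 1) * real (card BH)" by (simp add: algebra_simps)
    also have "\<dots> \<le> (k + 1) * real (card BH)" using Kk by (intro mult_right_mono) auto
    finally have "real (card B) \<le> (k + 1) * real (card BH)" .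
    then show ?thesis unfolding P_def[symmetric] H_def[symmetric] fP fH by simp
  qed
qed


end
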